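(* Let $\mathcal{M}=(S,E,T)$ be a trivially parametric Markov chain satisfying the standing assumptions below. Then there exists a finest valuation for $\mathcal{M}$, i.e. a graph-preserving valuation $\mathsf{val}$ such that for all $u,v\in S$, $P_{\mathsf{val}}(u)=P_{\mathsf{val}}(v)$ if and only if $u\sim v$.
   Context: A trivially parametric Markov chain $\mathcal{M}=(S,E,T)$ consists of a finite set of states $S$, targets $T=\{\mathit{fin},\mathit{fail}\}$ with no outgoing edges, and edges $E\subseteq(S\setminus T)\times S$. A graph-preserving valuation assigns to each non-target $s$ a full-support probability distribution on its successor set $sE$; $P_{\mathsf{val}}(s)$ is the probability of reaching $\mathit{fin}$ from $s$ in the resulting Markov chain. $u\sim v$ iff $P_{\mathsf{val}}(u)=P_{\mathsf{val}}(v)$ for every graph-preserving valuation. Standing assumptions: the equivalence classes of $\mathit{fin}$ and $\mathit{fail}$ are $\{\mathit{fin}\}$ and $\{\mathit{fail}\}$; no state has a self-loop; every non-target state has exactly two successors. *)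

theory Defs
  imports Complex_Main
begin

text \<open>A valuation is a function val :: 's => 's => real, val s t being the probability
  of the transition s -> t.\<close>

definition succs :: "('s \<times> 's) set \<Rightarrow> 's \<Rightarrow> 's set" where
  "succs E s = {t. (s, t) \<in> E}"

definition graph_preserving ::
  "'s set \<Rightarrow> ('s \<times> 's) set \<Rightarrow> 's set \<Rightarrow> ('s \<Rightarrow> 's \<Rightarrow> real) \<Rightarrow> bool" where
  "graph_preserving S E T val \<longleftrightarrow>
     (\<forall>s \<in> S - T. (\<forall>t \<in> succs E s. val s t > 0) \<and> (\<Sum>t \<in> succs E s. val s t) = 1)"

fun reach_within ::
  "('s \<times> 's) set \<Rightarrow> 's set \<Rightarrow> 's \<Rightarrow> ('s \<Rightarrow> 's \<Rightarrow> real) \<Rightarrow> nat \<Rightarrow> 's \<Rightarrow> real" where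
  "reach_within E T fin val 0 s = (if s = fin then 1 else 0)"
| "reach_within E T fin val (Suc n) s =
     (if s \<in> T then (if s = fin then 1 else 0)
      else (\<Sum>t \<in> succs E s. val s t * reach_within E T fin val n t))"

text \<open>P_val(s): probability of (eventually) reaching fin from s, the limit of the
  (monotonically increasing, bounded) bounded-horizon reachability probabilities.\<close>
definition reach_prob ::
  "('s \<times> 's) set \<Rightarrow> 's set \<Rightarrow> 's \<Rightarrow> ('s \<Rightarrow> 's \<Rightarrow> real) \<Rightarrow> 's \<Rightarrow> real" where
  "reach_prob E T fin val s = lim (\<lambda>n. reach_within E T fin val n s)"

definition equiv_states ::
  "'s set \<Rightarrow> ('s \<times> 's) set \<Rightarrow> 's \<Rightarrow> 's \<Rightarrow> 's \<Rightarrow> 's \<Rightarrow> bool" where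
  "equiv_states S E fin fail u v \<longleftrightarrow>
     (\<forall>val. graph_preserving S E {fin, fail} val \<longrightarrow>
        reach_prob E {fin, fail} fin val u = reach_prob E {fin, fail} fin val v)"

end

theory Submission
  imports Defs "Jordan_Normal_Form.Determinant"
begin

definition polyfun :: "(real \<Rightarrow> real) \<Rightarrow> bool" where
  "polyfun f \<longleftrightarrow> (\<exists>p. \<forall>t. f t = poly p t)"

lemma polyfun_const: "polyfun (\<lambda>t. c)"
  unfolding polyfun_def by (rule exI[of _ "[:c:]"]) simp

lemma polyfun_affine: "polyfun (\<lambda>t. (1 - t) * \<alpha> + t * \<beta>)"
  unfolding polyfun_def by (rule exI[of _ "[:\<alpha>, \<beta> - \<alpha>:]"]) (simp add: algebra_simps)

lemma polyfun_add: "polyfun f \<Longrightarrow> polyfun g \<Longrightarrow> polyfun (\<lambda>t. f t + g t)"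
  unfolding polyfun_def by (metis poly_add)

lemma polyfun_diff: "polyfun f \<Longrightarrow> polyfun g \<Longrightarrow> polyfun (\<lambda>t. f t - g t)"
  unfolding polyfun_def by (metis poly_diff)

lemma polyfun_mult: "polyfun f \<Longrightarrow> polyfun g \<Longrightarrow> polyfun (\<lambda>t. f t * g t)"
  unfolding polyfun_def by (metis poly_mult)

lemma polyfun_if: "polyfun f \<Longrightarrow> polyfun g \<Longrightarrow> polyfun (\<lambda>t. if c then f t else g t)"
  by (cases c) auto

lemma polyfun_sum: "(\<And>x. x \<in> A \<Longrightarrow> polyfun (f x)) \<Longrightarrow> polyfun (\<lambda>t. \<Sum>x\<in>A. f x t)"
proof (induction A rule: infinite_finite_induct)
  case (infinite A) then show ?case by (simp add: polyfun_const)
next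
  case empty then show ?case by (simp add: polyfun_const)
next
  case (insert x F) then show ?case by (simp add: polyfun_add)
qed

lemma polyfun_prod: "(\<And>x. x \<in> A \<Longrightarrow> polyfun (f x)) \<Longrightarrow> polyfun (\<lambda>t. \<Prod>x\<in>A. f x t)"
proof (induction A rule: infinite_finite_induct)
  case (infinite A) then show ?case by (simp add: polyfun_const)
next
  case empty then show ?case by (simp add: polyfun_const)
next
  case (insert x F) then show ?case by (simp add: polyfun_mult)
qed

lemma polyfun_roots: assumes "polyfun f" "f t0 \<noteq> 0" shows "finite {t. f t = 0}"
proof -
  obtain p where p: "\<forall>t. f t = poly p t" using assms(1) unfolding polyfun_def by blast
  then have "p \<noteq> 0" using assms(2) by auto
  then show ?thesis using poly_roots_finite[of p] p by simp
qed

lemma polyfun_det: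
  assumes "\<And>t. F t \<in> carrier_mat n n" "\<And>i j. i < n \<Longrightarrow> j < n \<Longrightarrow> polyfun (\<lambda>t. F t $$ (i,j))"
  shows "polyfun (\<lambda>t. det (F t))"
proof -
  have "polyfun (\<lambda>t. \<Sum>p\<in>{p. p permutes {0..<n}}. signof p * (\<Prod>i=0..<n. F t $$ (i, p i)))"
  proof (rule polyfun_sum)
    fix p assume "p \<in> {p. p permutes {0..<n}}"
    then have "\<And>i. i < n \<Longrightarrow> p i < n" using permutes_in_image by fastforce
    then show "polyfun (\<lambda>t. signof p * (\<Prod>i=0..<n. F t $$ (i, p i)))"
      by (intro polyfun_mult polyfun_const polyfun_prod) (auto intro: assms(2))
  qed
  then show ?thesis using det_def'[OF assms(1)] by simp
qed


definition seg :: "('s \<Rightarrow> 's \<Rightarrow> real) \<Rightarrow> ('s \<Rightarrow> 's \<Rightarrow> real) \<Rightarrow> real \<Rightarrow> 's \<Rightarrow> 's \<Rightarrow> real" where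
  "seg a b t = (\<lambda>s s'. (1 - t) * a s s' + t * b s s')"

locale mc =
  fixes S :: "'s set" and E :: "('s \<times> 's) set" and fin fail :: 's
  assumes finS: "finite S"
    and fin_in: "fin \<in> S" and fail_in: "fail \<in> S" and fin_ne_fail: "fin \<noteq> fail"
    and edges: "E \<subseteq> (S - {fin, fail}) \<times> S"
begin

abbreviation gp where "gp val \<equiv> graph_preserving S E {fin, fail} val"
abbreviation rw where "rw val n s \<equiv> reach_within E {fin, fail} fin val n s"
abbreviation R where "R val s \<equiv> reach_prob E {fin, fail} fin val s"

definition Q where "Q = {s. s \<notin> {fin, fail} \<and> (s, fin) \<in> E\<^sup>*}"
definition Pm :: "('s \<Rightarrow> 's \<Rightarrow> real) \<Rightarrow> 's \<Rightarrow> 's \<Rightarrow> real" where "Pm val s t = (if (s, t) \<in> E then val s t else 0)"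

lemma succs_sub: "succs E s \<subseteq> S" using edges by (auto simp: succs_def)
lemma finite_succs: "finite (succs E s)" using succs_sub finS finite_subset by blast
lemma succs_empty: "s \<notin> S - {fin, fail} \<Longrightarrow> succs E s = {}" using edges by (auto simp: succs_def)
lemma edge_src: "(s, t) \<in> E \<Longrightarrow> s \<in> S - {fin, fail} \<and> t \<in> S" using edges by auto

lemma gp_pos: "gp val \<Longrightarrow> (s, t) \<in> E \<Longrightarrow> val s t > 0"
  using edge_src[of s t] unfolding graph_preserving_def succs_def by auto

lemma gp_sum: "gp val \<Longrightarrow> s \<in> S - {fin, fail} \<Longrightarrow> (\<Sum>t\<in>succs E s. val s t) = 1"
  unfolding graph_preserving_def by auto

lemma Q_sub: "Q \<subseteq> S - {fin, fail}"
proof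
  fix s assume "s \<in> Q"
  then have "s \<notin> {fin, fail}" "(s, fin) \<in> E\<^sup>*" by (auto simp: Q_def)
  then obtain t where "(s, t) \<in> E" by (metis converse_rtranclE insertCI)
  then show "s \<in> S - {fin, fail}" using edge_src by blast
qed

lemma finite_Q: "finite Q" using Q_sub finS finite_subset by blast
lemma fin_notin_Q: "fin \<notin> Q" by (auto simp: Q_def)

lemma rw_bounds: "gp val \<Longrightarrow> 0 \<le> rw val n s \<and> rw val n s \<le> 1"
proof (induction n arbitrary: s)
  case 0 then show ?case by simp
next
  case (Suc n)
  show ?case
  proof (cases "s \<in> S - {fin, fail}")
    case True
    have "(\<Sum>t\<in>succs E s. val s t * rw val n t) \<le> (\<Sum>t\<in>succs E s. val s t)"
      using Suc gp_pos[OF Suc.prems] by (intro sum_mono) (auto simp: succs_def intro: mult_left_le less_imp_le)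
    moreover have "0 \<le> (\<Sum>t\<in>succs E s. val s t * rw val n t)"
      using Suc gp_pos[OF Suc.prems] by (intro sum_nonneg) (auto simp: succs_def less_imp_le)
    ultimately show ?thesis using True gp_sum[OF Suc.prems True] by simp
  next
    case False
    then show ?thesis using succs_empty[OF False] by auto
  qed
qed

lemma rw_mono: "gp val \<Longrightarrow> rw val n s \<le> rw val (Suc n) s"
proof (induction n arbitrary: s)
  case 0
  show ?case using rw_bounds[OF 0, of "Suc 0" s] by auto
next
  case (Suc n)
  show ?case
  proof (cases "s \<in> {fin, fail}")
    case True then show ?thesis by simp
  next
    case False
    have "(\<Sum>t\<in>succs E s. val s t * rw val n t) \<le> (\<Sum>t\<in>succs E s. val s t * rw val (Suc n) t)"
      using Suc gp_pos[OF Suc.prems] by (intro sum_mono mult_left_mono) (auto simp: succs_def less_imp_le)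
    then show ?thesis using False by simp
  qed
qed

lemma R_lim: assumes "gp val" shows "(\<lambda>n. rw val n s) \<longlonglongrightarrow> R val s"
proof -
  have "Bseq (\<lambda>n. rw val n s)" using rw_bounds[OF assms] by (intro BseqI'[of _ 1]) auto
  moreover have "monoseq (\<lambda>n. rw val n s)" using rw_mono[OF assms] by (intro mono_SucI1) auto
  ultimately have "convergent (\<lambda>n. rw val n s)" by (rule Bseq_monoseq_convergent)
  then show ?thesis unfolding reach_prob_def convergent_LIMSEQ_iff .
qed

lemma R_fin: assumes "gp val" shows "R val fin = 1"
proof -
  have "(\<lambda>n. rw val n fin) = (\<lambda>n. 1)" by (rule ext, case_tac n) auto
  then show ?thesis using R_lim[OF assms, of fin] LIMSEQ_unique tendsto_const by metis
qed

lemma R_zero: assumes "gp val" "s \<notin> Q" "s \<noteq> fin" shows "R val s = 0"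
proof -
  have "\<forall>s. s \<notin> Q \<and> s \<noteq> fin \<longrightarrow> rw val n s = 0" for n
  proof (induction n)
    case 0 then show ?case by simp
  next
    case (Suc n)
    show ?case
    proof (intro allI impI)
      fix s assume s: "s \<notin> Q \<and> s \<noteq> fin"
      show "rw val (Suc n) s = 0"
      proof (cases "s \<in> {fin, fail}")
        case True then show ?thesis using s by auto
      next
        case False
        then have nr: "(s, fin) \<notin> E\<^sup>*" using s by (auto simp: Q_def)
        have "rw val n t = 0" if "t \<in> succs E s" for t
        proof -
          have st: "(s, t) \<in> E" using that by (auto simp: succs_def)
          then have "(t, fin) \<notin> E\<^sup>*" using nr by (meson converse_rtrancl_into_rtrancl)
          then have "t \<notin> Q \<and> t \<noteq> fin" by (auto simp: Q_def)
          then show ?thesis using Suc by blast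
        qed
        then show ?thesis using False by simp
      qed
    qed
  qed
  then have "(\<lambda>n. rw val n s) = (\<lambda>n. 0)" using assms by auto
  then show ?thesis using R_lim[OF assms(1), of s] LIMSEQ_unique tendsto_const by metis
qed

lemma R_eq: assumes "gp val" "s \<in> S - {fin, fail}"
  shows "R val s = (\<Sum>t\<in>succs E s. val s t * R val t)"
proof -
  have "(\<lambda>n. rw val (Suc n) s) \<longlonglongrightarrow> R val s" using LIMSEQ_Suc[OF R_lim[OF assms(1)]] .
  moreover have "(\<lambda>n. rw val (Suc n) s) = (\<lambda>n. \<Sum>t\<in>succs E s. val s t * rw val n t)"
    using assms(2) by auto
  moreover have "(\<lambda>n. \<Sum>t\<in>succs E s. val s t * rw val n t) \<longlonglongrightarrow> (\<Sum>t\<in>succs E s. val s t * R val t)"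
    by (intro tendsto_sum tendsto_mult tendsto_const R_lim[OF assms(1)])
  ultimately show ?thesis using LIMSEQ_unique by metis
qed

lemma Pm_nonneg: "gp val \<Longrightarrow> 0 \<le> Pm val s t"
  using gp_pos[of val s t] by (auto simp: Pm_def)

lemma sum_S_succs: "(\<Sum>t\<in>S. Pm val s t * f t) = (\<Sum>t\<in>succs E s. val s t * f t)"
proof (rule sum.mono_neutral_cong_right[OF finS succs_sub])
  show "\<forall>i\<in>S - succs E s. Pm val s i * f i = 0" by (simp add: Pm_def succs_def)
  show "\<And>x. x \<in> succs E s \<Longrightarrow> Pm val s x * f x = val s x * f x" by (simp add: Pm_def succs_def)
qed

lemma sum_Pm: assumes "gp val" "s \<in> S - {fin, fail}" shows "(\<Sum>t\<in>S. Pm val s t) = 1"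
  using sum_S_succs[of val s "\<lambda>_. 1"] gp_sum[OF assms] by simp

lemma R_eqQ: assumes "gp val" "s \<in> Q"
  shows "R val s = (\<Sum>t\<in>Q. Pm val s t * R val t) + Pm val s fin"
proof -
  have s: "s \<in> S - {fin, fail}" using assms Q_sub by blast
  have "R val s = (\<Sum>t\<in>S. Pm val s t * R val t)" unfolding sum_S_succs by (rule R_eq[OF assms(1) s])
  also have "\<dots> = (\<Sum>t\<in>insert fin Q. Pm val s t * R val t)"
    by (rule sum.mono_neutral_right[OF finS]) (use Q_sub fin_in R_zero[OF assms(1)] in auto)
  also have "\<dots> = (\<Sum>t\<in>Q. Pm val s t * R val t) + Pm val s fin"
    using finite_Q fin_notin_Q R_fin[OF assms(1)] by simp
  finally show ?thesis .
qed


lemma inj_sys: assumes "gp val" and sys: "\<forall>s\<in>Q. x s = (\<Sum>t\<in>Q. Pm val s t * x t)" and "s0 \<in> Q"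
  shows "x s0 = 0"
proof (rule ccontr)
  assume ne: "x s0 \<noteq> 0"
  define m where "m = Max ((\<lambda>s. \<bar>x s\<bar>) ` Q)"
  have m_ge: "\<bar>x s\<bar> \<le> m" if "s \<in> Q" for s using that finite_Q by (auto simp: m_def)
  have mpos: "m > 0" using m_ge[OF assms(3)] ne by auto
  obtain s1 where s1: "s1 \<in> Q" "\<bar>x s1\<bar> = m"
  proof -
    have "m \<in> (\<lambda>s. \<bar>x s\<bar>) ` Q" unfolding m_def using finite_Q assms(3) by (intro Max_in) auto
    then show ?thesis using that by auto
  qed
  define M where "M = {s\<in>Q. \<bar>x s\<bar> = m}"
  define y where "y t = (if t \<in> Q then \<bar>x t\<bar> else 0)" for t
  have y_le: "y t \<le> m" for t using m_ge mpos by (auto simp: y_def)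
  have clos: "t \<in> M" if "s \<in> M" "(s, t) \<in> E" for s t
  proof -
    have sQ: "s \<in> Q" and xs: "\<bar>x s\<bar> = m" using that by (auto simp: M_def)
    have sS: "s \<in> S - {fin, fail}" using sQ Q_sub by blast
    have xe: "x s = (\<Sum>t\<in>Q. Pm val s t * x t)" using sys sQ by blast
    have "m = \<bar>\<Sum>t\<in>Q. Pm val s t * x t\<bar>" using xs by (subst xe[symmetric]) simp
    also have "\<dots> \<le> (\<Sum>t\<in>Q. \<bar>Pm val s t * x t\<bar>)" by (rule sum_abs)
    also have "\<dots> = (\<Sum>t\<in>Q. Pm val s t * y t)"
      by (rule sum.cong[OF refl]) (simp add: y_def abs_mult abs_of_nonneg[OF Pm_nonneg[OF assms(1)]])
    also have "\<dots> = (\<Sum>t\<in>S. Pm val s t * y t)"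
    proof (rule sum.mono_neutral_left[OF finS])
      show "Q \<subseteq> S" using Q_sub by blast
      show "\<forall>i\<in>S - Q. Pm val s i * y i = 0" by (simp add: y_def)
    qed
    finally have le: "m \<le> (\<Sum>t\<in>S. Pm val s t * y t)" .
    have "(\<Sum>t\<in>S. Pm val s t * (m - y t)) = (\<Sum>t\<in>S. m * Pm val s t - Pm val s t * y t)"
      by (rule sum.cong[OF refl]) (simp add: algebra_simps)
    also have "\<dots> = m * (\<Sum>t\<in>S. Pm val s t) - (\<Sum>t\<in>S. Pm val s t * y t)"
      by (simp only: sum_subtractf sum_distrib_left)
    also have "\<dots> = m - (\<Sum>t\<in>S. Pm val s t * y t)" using sum_Pm[OF assms(1) sS] by simp
    finally have up: "(\<Sum>t\<in>S. Pm val s t * (m - y t)) \<le> 0" using le by linarith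
    have nn: "\<forall>t\<in>S. 0 \<le> Pm val s t * (m - y t)"
    proof
      fix t assume "t \<in> S"
      have "0 \<le> Pm val s t" by (rule Pm_nonneg[OF assms(1)])
      moreover have "0 \<le> m - y t" using y_le[of t] by linarith
      ultimately show "0 \<le> Pm val s t * (m - y t)" by (rule mult_nonneg_nonneg)
    qed
    have "0 \<le> (\<Sum>t\<in>S. Pm val s t * (m - y t))" by (rule sum_nonneg) (use nn in blast)
    then have z: "(\<Sum>t\<in>S. Pm val s t * (m - y t)) = 0" using up by linarith
    have all0: "\<forall>t\<in>S. Pm val s t * (m - y t) = 0"
      using z by (subst (asm) sum_nonneg_eq_0_iff[OF finS]) (use nn in auto)
    have tS: "t \<in> S" using edge_src[OF that(2)] by blast
    have pp: "Pm val s t > 0" using gp_pos[OF assms(1) that(2)] that(2) by (simp add: Pm_def)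
    have "Pm val s t * (m - y t) = 0" using all0 tS by blast
    then have "y t = m" using pp by simp
    then show ?thesis using mpos by (cases "t \<in> Q") (auto simp: y_def M_def)
  qed
  have "(s1, fin) \<in> E\<^sup>*" using s1 by (auto simp: Q_def)
  moreover have "s1 \<in> M" using s1 by (auto simp: M_def)
  ultimately have "fin \<in> M"
    by (induction rule: rtrancl_induct) (auto intro: clos)
  then show False using fin_notin_Q by (auto simp: M_def)
qed

end


context mc
begin

definition Amat where "Amat q val = mat (card Q) (card Q) (\<lambda>(i,j). (if i = j then 1 else 0) - Pm val (q i) (q j))"
definition bvec where "bvec q val = vec (card Q) (\<lambda>i. Pm val (q i) fin)"
definition xvec where "xvec q val = vec (card Q) (\<lambda>i. R val (q i))"

lemma Amat_carrier: "Amat q val \<in> carrier_mat (card Q) (card Q)" by (simp add: Amat_def)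

lemma Amat_mult_index: assumes "i < card Q" "dim_vec w = card Q"
  shows "(Amat q val *\<^sub>v w) $ i = w $ i - (\<Sum>j\<in>{0..<card Q}. Pm val (q i) (q j) * w $ j)"
proof -
  have "(Amat q val *\<^sub>v w) $ i = row (Amat q val) i \<bullet> w" using assms by (simp add: Amat_def)
  also have "\<dots> = (\<Sum>j\<in>{0..<card Q}. row (Amat q val) i $ j * w $ j)" unfolding scalar_prod_def using assms by simp
  also have "\<dots> = (\<Sum>j\<in>{0..<card Q}. (if i = j then w $ j else 0) - Pm val (q i) (q j) * w $ j)"
    by (rule sum.cong[OF refl]) (use assms in \<open>auto simp: Amat_def left_diff_distrib\<close>)
  also have "\<dots> = (\<Sum>j\<in>{0..<card Q}. (if i = j then w $ j else 0)) - (\<Sum>j\<in>{0..<card Q}. Pm val (q i) (q j) * w $ j)"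
    by (rule sum_subtractf)
  also have "(\<Sum>j\<in>{0..<card Q}. (if i = j then w $ j else 0)) = w $ i" using assms by simp
  finally show ?thesis .
qed

lemma A_x: assumes q: "bij_betw q {0..<card Q} Q" and gp: "gp val"
  shows "Amat q val *\<^sub>v xvec q val = bvec q val"
proof (rule eq_vecI)
  show "dim_vec (Amat q val *\<^sub>v xvec q val) = dim_vec (bvec q val)" by (simp add: Amat_def bvec_def)
  fix i assume "i < dim_vec (bvec q val)"
  then have i: "i < card Q" by (simp add: bvec_def)
  have qi: "q i \<in> Q" using q i by (auto dest: bij_betwE)
  have "(Amat q val *\<^sub>v xvec q val) $ i = R val (q i) - (\<Sum>j\<in>{0..<card Q}. Pm val (q i) (q j) * R val (q j))"
    using Amat_mult_index[OF i, where w="xvec q val" and q=q and val=val] i by (simp add: xvec_def)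
  also have "(\<Sum>j\<in>{0..<card Q}. Pm val (q i) (q j) * R val (q j)) = (\<Sum>t\<in>Q. Pm val (q i) t * R val t)"
    using sum.reindex_bij_betw[OF q, of "\<lambda>t. Pm val (q i) t * R val t"] by simp
  also have "R val (q i) - \<dots> = Pm val (q i) fin" using R_eqQ[OF gp qi] by simp
  finally show "(Amat q val *\<^sub>v xvec q val) $ i = bvec q val $ i" using i by (simp add: bvec_def)
qed

lemma detA_ne: assumes q: "bij_betw q {0..<card Q} Q" and gp: "gp val"
  shows "det (Amat q val) \<noteq> 0"
proof
  assume "det (Amat q val) = 0"
  then obtain v where v: "v \<in> carrier_vec (card Q)" "v \<noteq> 0\<^sub>v (card Q)" "Amat q val *\<^sub>v v = 0\<^sub>v (card Q)"
    using det_0_iff_vec_prod_zero[OF Amat_carrier] by blast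
  define x where "x s = v $ inv_into {0..<card Q} q s" for s
  have xq: "x (q j) = v $ j" if "j < card Q" for j using bij_betw_inv_into_left[OF q] that by (simp add: x_def)
  have sys: "\<forall>s\<in>Q. x s = (\<Sum>t\<in>Q. Pm val s t * x t)"
  proof
    fix s assume s: "s \<in> Q"
    define i where "i = inv_into {0..<card Q} q s"
    have i: "i < card Q" using bij_betwE[OF bij_betw_inv_into[OF q]] s by (auto simp: i_def)
    have qi: "q i = s" using bij_betw_inv_into_right[OF q s] by (simp add: i_def)
    have "0 = (Amat q val *\<^sub>v v) $ i" using v(3) i by simp
    also have "\<dots> = v $ i - (\<Sum>j\<in>{0..<card Q}. Pm val (q i) (q j) * v $ j)"
      using Amat_mult_index[OF i, where w=v and q=q and val=val] v(1) by simp
    also have "(\<Sum>j\<in>{0..<card Q}. Pm val (q i) (q j) * v $ j) = (\<Sum>j\<in>{0..<card Q}. Pm val s (q j) * x (q j))"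
      by (rule sum.cong[OF refl]) (simp add: xq qi)
    also have "\<dots> = (\<Sum>t\<in>Q. Pm val s t * x t)"
      using sum.reindex_bij_betw[OF q, of "\<lambda>t. Pm val s t * x t"] by simp
    finally show "x s = (\<Sum>t\<in>Q. Pm val s t * x t)" using xq[OF i] qi by simp
  qed
  have "v = 0\<^sub>v (card Q)"
  proof (rule eq_vecI)
    fix j assume "j < dim_vec (0\<^sub>v (card Q) :: real vec)"
    then have j: "j < card Q" by simp
    have "q j \<in> Q" using q j by (auto dest: bij_betwE)
    then have "x (q j) = 0" by (rule inj_sys[OF gp sys])
    then show "v $ j = 0\<^sub>v (card Q) $ j" using xq[OF j] j by simp
  qed (use v(1) in simp)
  then show False using v(2) by simp
qed

lemma gp_seg: assumes "gp a" "gp b" "t \<in> {0..1}" shows "gp (seg a b t)"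
  unfolding graph_preserving_def
proof (intro ballI conjI)
  fix s assume s: "s \<in> S - {fin, fail}"
  show "(\<Sum>x\<in>succs E s. seg a b t s x) = 1"
    using gp_sum[OF assms(1) s] gp_sum[OF assms(2) s]
    by (simp add: seg_def sum.distrib sum_distrib_left[symmetric])
  fix u assume u: "u \<in> succs E s"
  then have e: "(s, u) \<in> E" by (simp add: succs_def)
  have "a s u > 0" "b s u > 0" using gp_pos[OF assms(1) e] gp_pos[OF assms(2) e] by auto
  then show "seg a b t s u > 0" using assms(3)
    by (cases "t = 1") (auto simp: seg_def intro!: add_pos_nonneg)
qed

lemma seg0: "seg a b 0 = a" by (simp add: seg_def)
lemma seg1: "seg a b 1 = b" by (simp add: seg_def)

end


context mc
begin

lemma polyfun_Pm_seg: "polyfun (\<lambda>t. Pm (seg a b t) u v)"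
  by (cases "(u, v) \<in> E") (simp_all add: Pm_def seg_def polyfun_affine polyfun_const)

lemma key: assumes ga: "gp a" and gb: "gp b"
  shows "\<exists>D c. polyfun D \<and> (\<forall>s. polyfun (c s)) \<and>
    (\<forall>t\<in>{0..1}. D t \<noteq> 0 \<and> (\<forall>s. R (seg a b t) s * D t = c s t))"
proof -
  obtain q where q: "bij_betw q {0..<card Q} Q" using ex_bij_betw_nat_finite[OF finite_Q] by blast
  define n where "n = card Q"
  define D where "D t = det (Amat q (seg a b t))" for t
  define C where "C k t = det (replace_col (Amat q (seg a b t)) (bvec q (seg a b t)) k)" for k t
  define c where "c s t = (if s \<in> Q then C (inv_into {0..<n} q s) t else if s = fin then D t else 0)" for s t
  have Aent: "polyfun (\<lambda>t. Amat q (seg a b t) $$ (i, j))" if "i < n" "j < n" for i j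
  proof -
    have "(\<lambda>t. Amat q (seg a b t) $$ (i, j)) = (\<lambda>t. (if i = j then 1 else 0) - Pm (seg a b t) (q i) (q j))"
      using that by (simp add: Amat_def n_def)
    then show ?thesis by (simp add: polyfun_diff polyfun_const polyfun_Pm_seg)
  qed
  have pD: "polyfun D" unfolding D_def
    by (rule polyfun_det[where n=n]) (use Aent in \<open>simp_all add: Amat_def n_def\<close>)
  have pC: "polyfun (C k)" for k
  proof -
    have ent: "polyfun (\<lambda>t. replace_col (Amat q (seg a b t)) (bvec q (seg a b t)) k $$ (i, j))"
      if "i < n" "j < n" for i j
    proof -
      have "(\<lambda>t. replace_col (Amat q (seg a b t)) (bvec q (seg a b t)) k $$ (i, j)) =
          (\<lambda>t. if j = k then Pm (seg a b t) (q i) fin else Amat q (seg a b t) $$ (i, j))"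
        using that by (intro ext) (simp add: replace_col_def bvec_def n_def Amat_carrier[THEN carrier_matD(1)] Amat_carrier[THEN carrier_matD(2)])
      then show ?thesis using Aent[OF that] polyfun_Pm_seg by (cases "j = k") simp_all
    qed
    show ?thesis unfolding C_def
      by (rule polyfun_det[where n=n]) (use ent in \<open>simp_all add: replace_col_def Amat_def n_def\<close>)
  qed
  have pc: "polyfun (c s)" for s
    by (cases "s \<in> Q"; cases "s = fin") (simp_all add: c_def[abs_def] pC pD polyfun_const)
  have main: "D t \<noteq> 0 \<and> (\<forall>s. R (seg a b t) s * D t = c s t)" if t: "t \<in> {0..1}" for t
  proof -
    have g: "gp (seg a b t)" by (rule gp_seg[OF ga gb t])
    have Dne: "D t \<noteq> 0" unfolding D_def by (rule detA_ne[OF q g])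
    have Ck: "C k t = R (seg a b t) (q k) * D t" if k: "k < n" for k
    proof -
      have x: "xvec q (seg a b t) \<in> carrier_vec (card Q)" by (simp add: xvec_def)
      have "det (replace_col (Amat q (seg a b t)) (Amat q (seg a b t) *\<^sub>v xvec q (seg a b t)) k)
          = xvec q (seg a b t) $ k * det (Amat q (seg a b t))"
        by (rule cramer_lemma_mat[OF Amat_carrier x]) (use k in \<open>simp add: n_def\<close>)
      then show ?thesis using A_x[OF q g] k by (simp add: C_def D_def xvec_def n_def)
    qed
    have "R (seg a b t) s * D t = c s t" for s
    proof (cases "s \<in> Q")
      case True
      define k where "k = inv_into {0..<n} q s"
      have k: "k < n" using bij_betwE[OF bij_betw_inv_into[OF q]] True by (auto simp: k_def n_def)
      have qk: "q k = s" using bij_betw_inv_into_right[OF q True] by (simp add: k_def n_def)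
      show ?thesis using Ck[OF k] True qk by (simp add: c_def k_def)
    next
      case False
      then show ?thesis
        using R_fin[OF g] R_zero[OF g False] by (cases "s = fin") (simp_all add: c_def)
    qed
    with Dne show ?thesis by blast
  qed
  show ?thesis using pD pc main by blast
qed

lemma seg_choose: assumes ga: "gp a" and gb: "gp b" and F: "finite F"
  and dist: "\<forall>p\<in>F. \<exists>t0\<in>{0..1}. R (seg a b t0) (fst p) \<noteq> R (seg a b t0) (snd p)"
  shows "\<exists>t\<in>{0..1}. \<forall>p\<in>F. R (seg a b t) (fst p) \<noteq> R (seg a b t) (snd p)"
proof -
  obtain D c where K: "polyfun D \<and> (\<forall>s. polyfun (c s)) \<and>
    (\<forall>t\<in>{0..1}. D t \<noteq> 0 \<and> (\<forall>s. R (seg a b t) s * D t = c s t))"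
    using key[OF ga gb] by blast
  have pc: "\<And>s. polyfun (c s)" using K by blast
  have m: "\<And>t. t \<in> {0..1} \<Longrightarrow> D t \<noteq> 0 \<and> (\<forall>s. R (seg a b t) s * D t = c s t)"
    using K by blast
  define Z where "Z p = {t\<in>{0..1}. R (seg a b t) (fst p) = R (seg a b t) (snd p)}" for p
  have finZ: "finite (Z p)" if "p \<in> F" for p
  proof -
    have "\<exists>t0\<in>{0..1}. R (seg a b t0) (fst p) \<noteq> R (seg a b t0) (snd p)" using dist that by (rule bspec)
    then obtain t0 where t0: "t0 \<in> {0..1}" "R (seg a b t0) (fst p) \<noteq> R (seg a b t0) (snd p)"
      by (elim bexE) (rule that)
    have pg: "polyfun (\<lambda>t. c (fst p) t - c (snd p) t)" by (rule polyfun_diff[OF pc pc])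
    have D0: "D t0 \<noteq> 0" and ms: "\<And>s. R (seg a b t0) s * D t0 = c s t0" using m[OF t0(1)] by blast+
    have "c (fst p) t0 - c (snd p) t0 = (R (seg a b t0) (fst p) - R (seg a b t0) (snd p)) * D t0"
      by (simp only: ms[symmetric] left_diff_distrib)
    moreover have "(R (seg a b t0) (fst p) - R (seg a b t0) (snd p)) * D t0 \<noteq> 0" using D0 t0(2) by simp
    ultimately have "c (fst p) t0 - c (snd p) t0 \<noteq> 0" by simp
    then have fin: "finite {t. c (fst p) t - c (snd p) t = 0}" by (rule polyfun_roots[OF pg])
    have "Z p \<subseteq> {t. c (fst p) t - c (snd p) t = 0}"
    proof
      fix t assume "t \<in> Z p"
      then have "t \<in> {0..1}" "R (seg a b t) (fst p) = R (seg a b t) (snd p)" by (auto simp: Z_def)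
      then have tI: "t \<in> {0..1}" and eq: "R (seg a b t) (fst p) = R (seg a b t) (snd p)" by blast+
      have "R (seg a b t) (fst p) * D t = c (fst p) t" "R (seg a b t) (snd p) * D t = c (snd p) t"
        using m[OF tI] by blast+
      then have "c (fst p) t = c (snd p) t" using eq by simp
      then show "t \<in> {t. c (fst p) t - c (snd p) t = 0}" by simp
    qed
    then show ?thesis using fin finite_subset by blast
  qed
  have "finite (\<Union>p\<in>F. Z p)" using F finZ by (intro finite_UN_I)
  moreover have "\<not> finite {0..1::real}" by (rule infinite_Icc) simp
  ultimately have "\<not> finite ({0..1::real} - (\<Union>p\<in>F. Z p))" using Diff_infinite_finite by blast
  then have "{0..1::real} - (\<Union>p\<in>F. Z p) \<noteq> {}" by (intro notI) simp
  then obtain t where t: "t \<in> {0..1}" "t \<notin> (\<Union>p\<in>F. Z p)" by blast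
  then show ?thesis by (auto simp: Z_def)
qed

end


theorem lemma20:
  fixes S :: "'s set" and E :: "('s \<times> 's) set" and fin fail :: 's
  assumes finS: "finite S"
    and fin_in: "fin \<in> S" and fail_in: "fail \<in> S" and fin_ne_fail: "fin \<noteq> fail"
    and edges: "E \<subseteq> (S - {fin, fail}) \<times> S"
    and class_fin: "\<forall>u \<in> S. equiv_states S E fin fail u fin \<longrightarrow> u = fin"
    and class_fail: "\<forall>u \<in> S. equiv_states S E fin fail u fail \<longrightarrow> u = fail"
    and no_self_loops: "\<forall>s. (s, s) \<notin> E"
    and two_succs: "\<forall>s \<in> S - {fin, fail}. card (succs E s) = 2"
  shows "\<exists>val. graph_preserving S E {fin, fail} val \<and>
           (\<forall>u \<in> S. \<forall>v \<in> S.
              reach_prob E {fin, fail} fin val u = reach_prob E {fin, fail} fin val v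
              \<longleftrightarrow> equiv_states S E fin fail u v)"
proof -
  interpret mc S E fin fail using finS fin_in fail_in fin_ne_fail edges by unfold_locales
  define P0 where "P0 = {p. fst p \<in> S \<and> snd p \<in> S \<and> \<not> equiv_states S E fin fail (fst p) (snd p)}"
  have finP0: "finite P0"
  proof (rule finite_subset)
    show "P0 \<subseteq> S \<times> S" by (auto simp: P0_def)
    show "finite (S \<times> S)" using finS by simp
  qed
  have ex0: "\<exists>val. gp val"
  proof
    show "gp (\<lambda>s t. 1 / 2)" unfolding graph_preserving_def
    proof (intro ballI conjI)
      fix s assume s: "s \<in> S - {fin, fail}"
      then have c2: "card (succs E s) = 2" using two_succs by blast
      show "(\<Sum>t\<in>succs E s. 1 / 2 :: real) = 1" using c2 by simp
    qed simp
  qed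
  have ind: "B \<subseteq> P0 \<longrightarrow> (\<exists>val. gp val \<and> (\<forall>p\<in>B. R val (fst p) \<noteq> R val (snd p)))"
    if "finite B" for B
    using that
  proof (induction B rule: finite_induct)
    case empty then show ?case using ex0 by blast
  next
    case (insert p B)
    show ?case
    proof
      assume sub: "insert p B \<subseteq> P0"
      then obtain a where ga: "gp a" and da: "\<forall>p\<in>B. R a (fst p) \<noteq> R a (snd p)" using insert.IH by blast
      have "\<not> equiv_states S E fin fail (fst p) (snd p)" using sub by (auto simp: P0_def)
      then obtain b where gb: "gp b" and db: "R b (fst p) \<noteq> R b (snd p)"
        unfolding equiv_states_def by blast
      have "\<forall>p'\<in>insert p B. \<exists>t0\<in>{0..1}. R (seg a b t0) (fst p') \<noteq> R (seg a b t0) (snd p')"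
      proof
        fix p' assume "p' \<in> insert p B"
        then consider "p' = p" | "p' \<in> B" by blast
        then show "\<exists>t0\<in>{0..1}. R (seg a b t0) (fst p') \<noteq> R (seg a b t0) (snd p')"
        proof cases
          case 1 then show ?thesis using db seg1[of a b] by (intro bexI[of _ 1]) simp_all
        next
          case 2 then show ?thesis using da seg0[of a b] by (intro bexI[of _ 0]) simp_all
        qed
      qed
      from seg_choose[OF ga gb finite.insertI[OF insert.hyps(1)] this]
      obtain t where t: "t \<in> {0..1}" "\<forall>p'\<in>insert p B. R (seg a b t) (fst p') \<noteq> R (seg a b t) (snd p')"
        by blast
      show "\<exists>val. gp val \<and> (\<forall>p\<in>insert p B. R val (fst p) \<noteq> R val (snd p))"
        using gp_seg[OF ga gb t(1)] t(2) by blast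
    qed
  qed
  obtain val where gv: "gp val" and dv: "\<forall>p\<in>P0. R val (fst p) \<noteq> R val (snd p)"
    using ind[OF finP0] by blast
  have "\<forall>u \<in> S. \<forall>v \<in> S. R val u = R val v \<longleftrightarrow> equiv_states S E fin fail u v"
  proof (intro ballI iffI)
    fix u v assume u: "u \<in> S" and v: "v \<in> S"
    { assume "equiv_states S E fin fail u v"
      then show "R val u = R val v" using gv unfolding equiv_states_def by blast }
    { assume eq: "R val u = R val v"
      show "equiv_states S E fin fail u v"
      proof (rule ccontr)
        assume "\<not> equiv_states S E fin fail u v"
        then have "(u, v) \<in> P0" using u v by (simp add: P0_def)
        then show False using dv eq by fastforce
      qed }
  qed
  then show ?thesis using gv by blast
qed

end
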